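(* Let $m,k,\ell,q,u,w$ be nonnegative integers with $u\le m$ and $m+(k+2\ell)q = u+(k+2\ell)w$, and set $n = m+(k+2\ell)q$. Let $g\colon \mathbb{C}^m\to\mathbb{C}^u$ and $p\colon \mathbb{C}^{m+q}\to\mathbb{C}^w$ be polynomial maps with real coefficients, and define $f\colon\mathbb{C}^n\to\mathbb{C}^n$ by $$f(a,b_1,\dots,b_k,c_1,\dots,c_\ell,d_1,\dots,d_\ell) = \big(g(a),\ p(a,b_1),\dots,p(a,b_k),\ p(a,c_1),\dots,p(a,c_\ell),\ p(a,d_1),\dots,p(a,d_\ell)\big),$$ where $a\in\mathbb{C}^m$ and $b_r,c_s,d_t\in\mathbb{C}^q$. Then the set $$V=\left\{(a,b_1,\dots,b_k,c_1,\dots,c_\ell,\overline{c_1},\dots,\overline{c_\ell}) : a\in\mathbb{R}^m,\ b_i\in\mathbb{R}^q,\ c_j\in\mathbb{C}^q\right\}\subset\mathbb{C}^n$$ is Newton invariant with respect to $f$, where $\overline{\,\cdot\,}$ denotes (coordinatewise) complex conjugation.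
   Context: For an analytic map $f\colon\mathbb{C}^n\to\mathbb{C}^n$ with Jacobian matrix $Df(x)$, the Newton iteration map $N_f\colon\mathbb{C}^n\to\mathbb{C}^n$ is defined by $N_f(x)=x-Df(x)^{-1}f(x)$ if $Df(x)$ is invertible and $N_f(x)=x$ otherwise; $N_f^k$ denotes the $k$-fold composition of $N_f$. A set $V\subset\mathbb{C}^n$ is called Newton invariant with respect to $f$ if $N_f(v)\in V$ for every $v\in V$, and $\lim_{k\to\infty}N_f^k(v)\in V$ for every $v\in V$ for which this limit exists. *)

theory Defs
  imports Complex_Main "Jordan_Normal_Form.Determinant"
begin

definition real_poly_fun :: "nat \<Rightarrow> (complex vec \<Rightarrow> complex) \<Rightarrow> bool" where
  "real_poly_fun m h \<longleftrightarrow> (\<exists>(S :: (nat \<Rightarrow> nat) set) (c :: (nat \<Rightarrow> nat) \<Rightarrow> real). finite S \<and>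
     (\<forall>x. dim_vec x = m \<longrightarrow> h x = (\<Sum>\<alpha>\<in>S. of_real (c \<alpha>) * (\<Prod>i<m. (x $ i) ^ \<alpha> i))))"

definition real_poly_map :: "nat \<Rightarrow> nat \<Rightarrow> (complex vec \<Rightarrow> complex vec) \<Rightarrow> bool" where
  "real_poly_map m u g \<longleftrightarrow> (\<forall>x. dim_vec x = m \<longrightarrow> dim_vec (g x) = u) \<and>
     (\<forall>j<u. real_poly_fun m (\<lambda>x. g x $ j))"

definition jacobian :: "nat \<Rightarrow> (complex vec \<Rightarrow> complex vec) \<Rightarrow> complex vec \<Rightarrow> complex mat" where
  "jacobian n f x = mat n n (\<lambda>(i, j).
      (THE D. ((\<lambda>t. f (vec n (\<lambda>l. if l = j then t else x $ l)) $ i)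
                 has_field_derivative D) (at (x $ j))))"

definition inv_mat :: "nat \<Rightarrow> complex mat \<Rightarrow> complex mat" where
  "inv_mat n A = (THE B. B \<in> carrier_mat n n \<and> A * B = 1\<^sub>m n \<and> B * A = 1\<^sub>m n)"

definition newton_map :: "nat \<Rightarrow> (complex vec \<Rightarrow> complex vec) \<Rightarrow> complex vec \<Rightarrow> complex vec" where
  "newton_map n f x = (if invertible_mat (jacobian n f x)
      then x - inv_mat n (jacobian n f x) *\<^sub>v f x else x)"

definition newton_invariant :: "nat \<Rightarrow> (complex vec \<Rightarrow> complex vec) \<Rightarrow> complex vec set \<Rightarrow> bool" where
  "newton_invariant n f V \<longleftrightarrow>
     (\<forall>v\<in>V. newton_map n f v \<in> V) \<and>
     (\<forall>v\<in>V. \<forall>L. dim_vec L = n \<and> (\<forall>i<n. (\<lambda>k. ((newton_map n f ^^ k) v) $ i) \<longlonglongrightarrow> L $ i)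
         \<longrightarrow> L \<in> V)"

definition blk :: "nat \<Rightarrow> nat \<Rightarrow> complex vec \<Rightarrow> nat \<Rightarrow> complex vec" where
  "blk m q x j = vec q (\<lambda>i. x $ (m + j * q + i))"

definition pair_blk :: "nat \<Rightarrow> nat \<Rightarrow> complex vec \<Rightarrow> nat \<Rightarrow> complex vec" where
  "pair_blk m q x j = vec (m + q) (\<lambda>i. if i < m then x $ i else x $ (m + j * q + (i - m)))"

text \<open>f(a, b_1..b_k, c_1..c_l, d_1..d_l) = (g a, p(a,b_1), ..., p(a,d_l)); the
  blocks b, c, d are the blocks 0..k-1, k..k+l-1, k+l..k+2l-1.\<close>
definition newton_f :: "nat \<Rightarrow> nat \<Rightarrow> nat \<Rightarrow> nat \<Rightarrow> nat \<Rightarrow>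
    (complex vec \<Rightarrow> complex vec) \<Rightarrow> (complex vec \<Rightarrow> complex vec) \<Rightarrow> complex vec \<Rightarrow> complex vec" where
  "newton_f n m q u w g p x = vec n (\<lambda>i.
     if i < u then g (vec m (\<lambda>l. x $ l)) $ i
     else p (pair_blk m q x ((i - u) div w)) $ ((i - u) mod w))"

definition V_set :: "nat \<Rightarrow> nat \<Rightarrow> nat \<Rightarrow> nat \<Rightarrow> nat \<Rightarrow> complex vec set" where
  "V_set n m k l q = {x. dim_vec x = n \<and> (\<forall>i<m. x $ i \<in> \<real>) \<and>
     (\<forall>r<k. \<forall>i<q. blk m q x r $ i \<in> \<real>) \<and>
     (\<forall>s<l. \<forall>i<q. blk m q x (k + l + s) $ i = cnj (blk m q x (k + s) $ i))}"

end

theory Submission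
  imports "HOL-Analysis.Complex_Analysis_Basics" Defs
begin

no_notation Finite_Cartesian_Product.vec_nth (infixl \<open>$\<close> 90)

lemma J_sym:
  fixes F :: "complex vec \<Rightarrow> complex vec"
  assumes pinv: "\<And>j. pin (pin j) = j" and pinb: "\<And>j. j<n \<Longrightarrow> pin j < n"
    and poutb: "\<And>i. i<n \<Longrightarrow> pout i < n"
    and Fsym: "\<And>y i. dim_vec y = n \<Longrightarrow> i<n \<Longrightarrow> F (vec n (\<lambda>l. cnj (y $ pin l))) $ i = cnj (F y $ pout i)"
    and hol: "\<And>x i j. dim_vec x = n \<Longrightarrow> i<n \<Longrightarrow> j<n \<Longrightarrow>
        (\<lambda>t. F (vec n (\<lambda>l. if l=j then t else x$l)) $ i) holomorphic_on UNIV"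
    and v: "dim_vec v = n" "\<And>j. j<n \<Longrightarrow> v$j = cnj (v $ pin j)"
    and ij: "i<n" "j<n"
  shows "jacobian n F v $$ (i,j) = cnj (jacobian n F v $$ (pout i, pin j))"
proof -
  define \<psi> where "\<psi> = (\<lambda>t. F (vec n (\<lambda>l. if l=pin j then t else v$l)) $ pout i)"
  have eq: "F (vec n (\<lambda>l. if l=j then t else v$l)) $ i = cnj (\<psi> (cnj t))" for t
  proof -
    let ?xt = "vec n (\<lambda>l. if l=j then t else v$l)"
    let ?y = "vec n (\<lambda>l. if l=pin j then cnj t else v$l)"
    have "vec n (\<lambda>l. cnj (?y $ pin l)) = ?xt"
    proof (rule eq_vecI)
      fix l assume l: "l < dim_vec ?xt"
      hence l': "l < n" by simp
      have "(pin l = pin j) = (l = j)" by (metis pinv)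
      then show "vec n (\<lambda>l. cnj (?y $ pin l)) $ l = ?xt $ l"
        using l' pinb[OF l'] v(2)[OF l'] by auto
    qed simp
    then show ?thesis using Fsym[of ?y i] ij unfolding \<psi>_def by simp
  qed
  have h\<psi>: "\<psi> holomorphic_on UNIV" unfolding \<psi>_def using hol[OF v(1) poutb[OF ij(1)] pinb[OF ij(2)]] .
  have d\<psi>: "(\<psi> has_field_derivative deriv \<psi> z) (at z)" for z
    using holomorphic_derivI[OF h\<psi>] by auto
  have vpj: "v $ pin j = cnj (v $ j)" using v(2)[OF pinb[OF ij(2)]] pinv by simp
  have fe: "(\<lambda>t. F (vec n (\<lambda>l. if l=j then t else v$l)) $ i) = cnj \<circ> \<psi> \<circ> cnj"
    using eq by (auto simp: o_def)
  have d1: "((\<lambda>t. F (vec n (\<lambda>l. if l=j then t else v$l)) $ i) has_field_derivative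
              cnj (deriv \<psi> (cnj (v$j)))) (at (v$j))"
    unfolding fe by (rule has_field_derivative_cnj_cnj) (simp add: d\<psi>)
  have t1: "(THE D. ((\<lambda>t. F (vec n (\<lambda>l. if l=j then t else v$l)) $ i) has_field_derivative D) (at (v$j)))
      = cnj (deriv \<psi> (cnj (v$j)))"
    by (rule the_equality, rule d1, rule DERIV_unique[OF _ d1])
  have t2: "(THE D. (\<psi> has_field_derivative D) (at (v $ pin j))) = deriv \<psi> (cnj (v$j))"
    unfolding vpj by (rule the_equality, rule d\<psi>, rule DERIV_unique[OF _ d\<psi>])
  have "jacobian n F v $$ (i,j) = cnj (deriv \<psi> (cnj (v$j)))"
    unfolding jacobian_def using ij t1 by simp
  moreover have "jacobian n F v $$ (pout i, pin j) = deriv \<psi> (cnj (v$j))"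
    unfolding jacobian_def using poutb[OF ij(1)] pinb[OF ij(2)] t2 by (simp add: \<psi>_def)
  ultimately show ?thesis by simp
qed

lemma sum_pin:
  fixes pin :: "nat \<Rightarrow> nat"
  assumes pinv: "\<And>j. pin (pin j) = j" and pinb: "\<And>j. j<n \<Longrightarrow> pin j < n"
  shows "(\<Sum>j\<in>{0..<n}. h (pin j)) = (\<Sum>j\<in>{0..<n}. (h j :: complex))"
  by (rule sum.reindex_bij_witness[of _ pin pin]) (auto simp: pinv pinb)

lemma newton_sym:
  fixes F :: "complex vec \<Rightarrow> complex vec"
  assumes pinv: "\<And>j. pin (pin j) = j" and pinb: "\<And>j. j<n \<Longrightarrow> pin j < n"
    and poutb: "\<And>i. i<n \<Longrightarrow> pout i < n"
    and Fsym: "\<And>y i. dim_vec y = n \<Longrightarrow> i<n \<Longrightarrow> F (vec n (\<lambda>l. cnj (y $ pin l))) $ i = cnj (F y $ pout i)"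
    and hol: "\<And>x i j. dim_vec x = n \<Longrightarrow> i<n \<Longrightarrow> j<n \<Longrightarrow>
        (\<lambda>t. F (vec n (\<lambda>l. if l=j then t else x$l)) $ i) holomorphic_on UNIV"
    and Fdim: "\<And>y. dim_vec (F y) = n"
    and v: "dim_vec v = n" "\<And>j. j<n \<Longrightarrow> v$j = cnj (v $ pin j)"
  shows "dim_vec (newton_map n F v) = n \<and> (\<forall>j<n. newton_map n F v $ j = cnj (newton_map n F v $ pin j))"
proof (cases "invertible_mat (jacobian n F v)")
  case False then show ?thesis using v by (simp add: newton_map_def)
next
  case True
  define J where "J = jacobian n F v"
  have Jc: "J \<in> carrier_mat n n" by (simp add: J_def jacobian_def)
  from True obtain B where B1: "J * B = 1\<^sub>m n" and B2: "B * J = 1\<^sub>m (dim_row B)"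
    unfolding invertible_mat_def inverts_mat_def J_def[symmetric] using Jc by auto
  have Bc: "B \<in> carrier_mat n n"
    using B1 B2 Jc by (metis carrier_matD carrier_matI index_mult_mat(2,3) index_one_mat(2,3))
  have Z: "inv_mat n J \<in> carrier_mat n n \<and> J * inv_mat n J = 1\<^sub>m n \<and> inv_mat n J * J = 1\<^sub>m n"
    unfolding inv_mat_def
  proof (rule theI[of _ B])
    show "B \<in> carrier_mat n n \<and> J * B = 1\<^sub>m n \<and> B * J = 1\<^sub>m n" using Bc B1 B2 by auto
    fix C assume C: "C \<in> carrier_mat n n \<and> J * C = 1\<^sub>m n \<and> C * J = 1\<^sub>m n"
    then have "C = C * (J * B)" using right_mult_one_mat[of C n n] C by (simp add: B1)
    also have "\<dots> = (C * J) * B" using C Jc Bc by (metis assoc_mult_mat)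
    also have "\<dots> = B" using C Bc by simp
    finally show "C = B" .
  qed
  define Z where "Z = inv_mat n J"
  define f where "f = F v"
  define z where "z = Z *\<^sub>v f"
  have Zc: "Z \<in> carrier_mat n n" and JZ: "J * Z = 1\<^sub>m n" and ZJ: "Z * J = 1\<^sub>m n"
    using Z Z_def by auto
  have fc: "f \<in> carrier_vec n" by (simp add: f_def Fdim carrier_vecI)
  have dz: "dim_vec z = n" using Zc by (simp add: z_def)
  have Jz: "J *\<^sub>v z = f" unfolding z_def
    using assoc_mult_mat_vec[OF Jc Zc fc, symmetric] JZ fc by simp
  have vfix: "vec n (\<lambda>l. cnj (v $ pin l)) = v"
    by (rule eq_vecI) (use v in auto)
  have fsym: "f $ i = cnj (f $ pout i)" if "i < n" for i
    using Fsym[OF v(1) that] vfix f_def by simp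
  define z' where "z' = vec n (\<lambda>j. cnj (z $ pin j))"
  have Jz': "J *\<^sub>v z' = f"
  proof (rule eq_vecI)
    fix i assume "i < dim_vec f"
    hence i: "i < n" by (simp add: f_def Fdim)
    have "(J *\<^sub>v z') $ i = (\<Sum>j\<in>{0..<n}. J $$ (i,j) * z' $ j)"
      using Jc i by (simp add: scalar_prod_def z'_def)
    also have "\<dots> = (\<Sum>j\<in>{0..<n}. cnj (J $$ (pout i, pin j) * z $ pin j))"
      using J_sym[OF pinv pinb poutb Fsym hol v i] J_def by (simp add: z'_def)
    also have "\<dots> = cnj (\<Sum>j\<in>{0..<n}. J $$ (pout i, pin j) * z $ pin j)"
      by simp
    also have "(\<Sum>j\<in>{0..<n}. J $$ (pout i, pin j) * z $ pin j) = (\<Sum>j\<in>{0..<n}. J $$ (pout i, j) * z $ j)"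
      by (rule sum_pin[OF pinv pinb])
    also have "\<dots> = (J *\<^sub>v z) $ pout i"
      using Jc poutb[OF i] dz by (simp add: scalar_prod_def)
    also have "\<dots> = f $ pout i" using Jz by simp
    finally show "(J *\<^sub>v z') $ i = f $ i" using fsym[OF i] by simp
  qed (insert Jc, simp add: f_def Fdim)
  have z'c: "z' \<in> carrier_vec n" by (simp add: z'_def carrier_vecI)
  have "z' = Z *\<^sub>v (J *\<^sub>v z')"
    using assoc_mult_mat_vec[OF Zc Jc z'c, symmetric] ZJ z'c by simp
  hence zz: "z' = z" using Jz' z_def by simp
  have nm: "newton_map n F v = v - z"
    using True by (simp add: newton_map_def J_def[symmetric] Z_def[symmetric] z_def f_def)
  show ?thesis
  proof (intro conjI allI impI)
    show "dim_vec (newton_map n F v) = n" using nm v dz by simp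
    fix j assume j: "j < n"
    have "z $ j = cnj (z $ pin j)" using zz j by (metis index_vec z'_def)
    then show "newton_map n F v $ j = cnj (newton_map n F v $ pin j)"
      using nm v j pinb[OF j] dz by simp
  qed
qed

lemma real_poly_fun_cnj:
  assumes "real_poly_fun M h" "dim_vec a = M"
  shows "h (vec M (\<lambda>i. cnj (a $ i))) = cnj (h a)"
proof -
  obtain S c where S: "\<And>x. dim_vec x = M \<Longrightarrow> h x = (\<Sum>\<alpha>\<in>S. of_real (c \<alpha>) * (\<Prod>i<M. (x $ i) ^ \<alpha> i))"
    using assms(1) unfolding real_poly_fun_def by blast
  show ?thesis using assms(2) by (simp add: S)
qed

lemma real_poly_fun_hol:
  assumes "real_poly_fun M h" "\<And>t. dim_vec (a t) = M"
    and "\<And>r. r < M \<Longrightarrow> (\<lambda>t. a t $ r) holomorphic_on UNIV"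
  shows "(\<lambda>t. h (a t)) holomorphic_on UNIV"
proof -
  obtain S c where S: "\<And>x. dim_vec x = M \<Longrightarrow> h x = (\<Sum>\<alpha>\<in>S. of_real (c \<alpha>) * (\<Prod>i<M. (x $ i) ^ \<alpha> i))"
    using assms(1) unfolding real_poly_fun_def by blast
  have "(\<lambda>t. h (a t)) = (\<lambda>t. \<Sum>\<alpha>\<in>S. of_real (c \<alpha>) * (\<Prod>i<M. (a t $ i) ^ \<alpha> i))"
    using S assms(2) by auto
  moreover have "(\<lambda>t. \<Sum>\<alpha>\<in>S. of_real (c \<alpha>) * (\<Prod>i<M. (a t $ i) ^ \<alpha> i)) holomorphic_on UNIV"
    using assms(3) by (intro holomorphic_intros) auto
  ultimately show ?thesis by simp
qed

lemma vec_index_out: "s \<ge> n \<Longrightarrow> vec n f $ s = vec n g $ s"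
  by transfer (simp add: mk_vec_def)

lemma X_hol: "(\<lambda>t. vec n (\<lambda>l. if l=j then t else x$l) $ s) holomorphic_on UNIV"
proof (cases "s < n")
  case True then show ?thesis by (cases "s = j") (auto intro: holomorphic_intros)
next
  case False
  then have "(\<lambda>t. vec n (\<lambda>l. if l=j then t else x$l) $ s) = (\<lambda>t. vec n (\<lambda>l. if l=j then 0 else x$l) $ s)"
    by (intro ext vec_index_out) (use False in simp)
  then show ?thesis by (simp add: holomorphic_intros)
qed

definition pb :: "nat \<Rightarrow> nat \<Rightarrow> nat \<Rightarrow> nat" where
  "pb k l B = (if k \<le> B \<and> B < k+l then B+l else if k+l \<le> B \<and> B < k+2*l then B-l else B)"

definition pn :: "nat \<Rightarrow> nat \<Rightarrow> nat \<Rightarrow> nat \<Rightarrow> nat \<Rightarrow> nat" where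
  "pn m k l q j = (if j < m then j else m + pb k l ((j-m) div q) * q + (j-m) mod q)"

lemma pb_pb: "pb k l (pb k l B) = B" unfolding pb_def by auto

lemma pb_lt: "B < k+2*l \<Longrightarrow> pb k l B < k+2*l" unfolding pb_def by auto

lemma blk_lt: "(c::nat) < d \<Longrightarrow> r < q \<Longrightarrow> m + c*q + r < m + d*q"
proof -
  assume "c < d" "r < q"
  then have "(c+1)*q \<le> d*q" by (intro mult_le_mono1) simp
  then show ?thesis using \<open>r<q\<close> by simp
qed

lemma pn_blk: "r < q \<Longrightarrow> pn m k l q (m + B*q + r) = m + pb k l B * q + r"
  unfolding pn_def by auto

lemma decomp:
  fixes m j K q :: nat
  assumes "m \<le> j" "j < m + K*q"
  obtains B r where "j = m + B*q + r" "r < q" "B < K"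
proof -
  have q: "q > 0" using assms by (cases q) auto
  have "(j-m) div q < K" using assms by (intro less_mult_imp_div_less) simp
  moreover have "j = m + (j-m) div q * q + (j-m) mod q" using assms by simp
  moreover have "(j-m) mod q < q" using q by simp
  ultimately show ?thesis using that by blast
qed

lemma pn_pn: "pn m k l q (pn m k l q j) = j"
proof (cases "j < m")
  case True then show ?thesis by (simp add: pn_def)
next
  case False
  show ?thesis
  proof (cases "q = 0")
    case True then show ?thesis using False by (simp add: pn_def)
  next
    case q: False
    define B where "B = (j-m) div q"
    define r where "r = (j-m) mod q"
    have j: "j = m + B*q + r" "r < q" using False q by (auto simp: B_def r_def)
    show ?thesis using j by (simp add: pn_blk pb_pb)
  qed
qed

lemma pn_lt: "j < m + (k+2*l)*q \<Longrightarrow> pn m k l q j < m + (k+2*l)*q"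
proof (cases "j < m")
  case True then show ?thesis by (simp add: pn_def)
next
  case False
  assume j: "j < m + (k+2*l)*q"
  obtain B r where "j = m + B*q + r" "r < q" "B < k+2*l"
    using decomp[of m j "k+2*l" q] False j by auto
  then show ?thesis by (simp add: pn_blk blk_lt pb_lt)
qed

lemma V_to_fix:
  assumes "x \<in> V_set n m k l q" "n = m + (k+2*l)*q" "j < n"
  shows "x $ j = cnj (x $ pn m k l q j)"
proof (cases "j < m")
  case True
  then have "x $ j \<in> \<real>" using assms(1) unfolding V_set_def by blast
  then show ?thesis using True by (simp add: pn_def Reals_cnj_iff)
next
  case False
  obtain B r where j: "j = m + B*q + r" "r < q" "B < k+2*l"
    using decomp[of m j "k+2*l" q] False assms by auto
  have bl: "\<And>s. blk m q x s $ r = x $ (m + s*q + r)" using j by (simp add: blk_def)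
  have pj: "pn m k l q j = m + pb k l B * q + r" using j by (simp add: pn_blk)
  have V: "\<forall>r<k. \<forall>i<q. blk m q x r $ i \<in> \<real>"
      "\<forall>s<l. \<forall>i<q. blk m q x (k + l + s) $ i = cnj (blk m q x (k + s) $ i)"
    using assms(1) unfolding V_set_def by blast+
  consider "B < k" | "k \<le> B" "B < k+l" | "k+l \<le> B" "B < k+2*l" using j by linarith
  then show ?thesis
  proof cases
    case 1
    then have "blk m q x B $ r \<in> \<real>" using V(1) j(2) by blast
    then have "x $ j \<in> \<real>" using bl j(1) by simp
    moreover have "pb k l B = B" using 1 by (simp add: pb_def)
    ultimately show ?thesis using pj j(1) by (simp add: Reals_cnj_iff)
  next
    case 2
    then have "B - k < l" by simp
    from V(2)[rule_format, OF this j(2)]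
    have "blk m q x (k + l + (B-k)) $ r = cnj (blk m q x (k + (B-k)) $ r)" .
    moreover have "k + l + (B-k) = B + l" "k + (B-k) = B" using 2 by simp_all
    ultimately have "x $ (m + (B+l)*q + r) = cnj (x $ j)" using bl j(1) by metis
    moreover have "pb k l B = B + l" using 2 by (simp add: pb_def)
    ultimately show ?thesis using pj by simp
  next
    case 3
    then have "B - k - l < l" by simp
    from V(2)[rule_format, OF this j(2)]
    have "blk m q x (k + l + (B-k-l)) $ r = cnj (blk m q x (k + (B-k-l)) $ r)" .
    moreover have "k + l + (B-k-l) = B" "k + (B-k-l) = B - l" using 3 by simp_all
    ultimately have "x $ j = cnj (x $ (m + (B-l)*q + r))" using bl j(1) by metis
    moreover have "pb k l B = B - l" using 3 by (simp add: pb_def)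
    ultimately show ?thesis using pj by simp
  qed
qed

lemma fix_to_V:
  assumes "dim_vec x = n" "n = m + (k+2*l)*q" "\<And>j. j < n \<Longrightarrow> x $ j = cnj (x $ pn m k l q j)"
  shows "x \<in> V_set n m k l q"
  unfolding V_set_def
proof (intro CollectI conjI allI impI)
  show "dim_vec x = n" by fact
  fix i assume i: "i < m"
  then have "i < n" using assms(2) by simp
  then have "x $ i = cnj (x $ pn m k l q i)" by (rule assms(3))
  moreover have "pn m k l q i = i" using i by (simp add: pn_def)
  ultimately have "cnj (x $ i) = x $ i" by (metis complex_cnj_cnj)
  then show "x $ i \<in> \<real>" unfolding Reals_cnj_iff .
next
  fix r i assume ri: "r < k" "i < q"
  have "r < k + 2*l" using ri by simp
  then have lt: "m + r*q + i < n" using blk_lt[OF _ ri(2), of r "k+2*l" m] assms(2) by simp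
  have "pn m k l q (m + r*q + i) = m + r*q + i" using ri by (simp add: pn_blk pb_def)
  moreover have "blk m q x r $ i = x $ (m + r*q + i)" using ri by (simp add: blk_def)
  ultimately have "cnj (blk m q x r $ i) = blk m q x r $ i" using assms(3)[OF lt] by (metis complex_cnj_cnj)
  then show "blk m q x r $ i \<in> \<real>" unfolding Reals_cnj_iff .
next
  fix s i assume si: "s < l" "i < q"
  have "k+l+s < k + 2*l" using si by simp
  then have lt: "m + (k+l+s)*q + i < n" using blk_lt[OF _ si(2), of "k+l+s" "k+2*l" m] assms(2) by simp
  have "pb k l (k+l+s) = k+s" using si by (simp add: pb_def)
  then have "pn m k l q (m + (k+l+s)*q + i) = m + (k+s)*q + i" using si by (simp add: pn_blk)
  moreover have "blk m q x (k+l+s) $ i = x $ (m + (k+l+s)*q + i)"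
     "blk m q x (k+s) $ i = x $ (m + (k+s)*q + i)" using si by (simp_all add: blk_def)
  ultimately show "blk m q x (k + l + s) $ i = cnj (blk m q x (k + s) $ i)"
    using assms(3)[OF lt] by simp
qed

lemma nf_hol:
  assumes n: "n = u + (k+2*l)*w" and gm: "real_poly_map m u g" and pm: "real_poly_map (m+q) w p"
    and i: "i < n"
  shows "(\<lambda>t. newton_f n m q u w g p (vec n (\<lambda>l. if l=j then t else x$l)) $ i) holomorphic_on UNIV"
proof (cases "i < u")
  case True
  have "(\<lambda>t. newton_f n m q u w g p (vec n (\<lambda>l. if l=j then t else x$l)) $ i)
     = (\<lambda>t. g (vec m (\<lambda>r. vec n (\<lambda>l. if l=j then t else x$l) $ r)) $ i)"
    using True i by (simp add: newton_f_def)
  moreover have "(\<lambda>t. g (vec m (\<lambda>r. vec n (\<lambda>l. if l=j then t else x$l) $ r)) $ i) holomorphic_on UNIV"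
  proof (rule real_poly_fun_hol[where M=m and h="\<lambda>z. g z $ i" and a="\<lambda>t. vec m (\<lambda>r. vec n (\<lambda>l. if l=j then t else x$l) $ r)"])
    show "real_poly_fun m (\<lambda>z. g z $ i)" using gm True unfolding real_poly_map_def by blast
    show "dim_vec (vec m (\<lambda>r. vec n (\<lambda>l. if l=j then t else x$l) $ r)) = m" for t by simp
    fix r assume "r < m"
    then show "(\<lambda>t. vec m (\<lambda>r. vec n (\<lambda>l. if l=j then t else x$l) $ r) $ r) holomorphic_on UNIV"
      by (simp add: X_hol)
  qed
  ultimately show ?thesis by simp
next
  case False
  have "w \<noteq> 0"
  proof
    assume "w = 0" then have "n = u" using n by simp
    then show False using False i by simp
  qed
  then have "w > 0" by simp
  define B where "B = (i - u) div w"
  define e where "e = (i - u) mod w"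
  have e: "e < w" using \<open>w > 0\<close> by (simp add: e_def)
  have "(\<lambda>t. newton_f n m q u w g p (vec n (\<lambda>l. if l=j then t else x$l)) $ i)
     = (\<lambda>t. p (pair_blk m q (vec n (\<lambda>l. if l=j then t else x$l)) B) $ e)"
    using False i by (simp add: newton_f_def B_def e_def)
  moreover have "(\<lambda>t. p (pair_blk m q (vec n (\<lambda>l. if l=j then t else x$l)) B) $ e) holomorphic_on UNIV"
  proof (rule real_poly_fun_hol[where M="m+q" and h="\<lambda>z. p z $ e" and a="\<lambda>t. pair_blk m q (vec n (\<lambda>l. if l=j then t else x$l)) B"])
    show "real_poly_fun (m + q) (\<lambda>z. p z $ e)" using pm e unfolding real_poly_map_def by blast
    show "dim_vec (pair_blk m q (vec n (\<lambda>l. if l=j then t else x$l)) B) = m + q" for t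
      by (simp add: pair_blk_def)
    fix r assume r: "r < m + q"
    show "(\<lambda>t. pair_blk m q (vec n (\<lambda>l. if l=j then t else x$l)) B $ r) holomorphic_on UNIV"
      using r by (cases "r < m") (simp_all add: pair_blk_def X_hol)
  qed
  ultimately show ?thesis by simp
qed

lemma nf_sym:
  assumes n1: "n = m + (k+2*l)*q" and n2: "n = u + (k+2*l)*w" and um: "u \<le> m"
    and gm: "real_poly_map m u g" and pm: "real_poly_map (m+q) w p"
    and y: "dim_vec y = n" and i: "i < n"
  shows "newton_f n m q u w g p (vec n (\<lambda>a. cnj (y $ pn m k l q a))) $ i
       = cnj (newton_f n m q u w g p y $ pn u k l w i)"
proof -
  define Y where "Y = vec n (\<lambda>a. cnj (y $ pn m k l q a))"
  show ?thesis unfolding Y_def[symmetric]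
  proof (cases "i < u")
    case True
    have pi: "pn u k l w i = i" using True by (simp add: pn_def)
    have "vec m (\<lambda>l. Y $ l) = vec m (\<lambda>l. cnj (vec m (\<lambda>l. y $ l) $ l))"
    proof (rule eq_vecI)
      fix r assume "r < dim_vec (vec m (\<lambda>l. cnj (vec m (\<lambda>l. y $ l) $ l)))"
      then have r: "r < m" by simp
      then have "r < n" using n1 by simp
      then show "vec m (\<lambda>l. Y $ l) $ r = vec m (\<lambda>l. cnj (vec m (\<lambda>l. y $ l) $ l)) $ r"
        using r by (simp add: Y_def pn_def)
    qed simp
    moreover have "real_poly_fun m (\<lambda>z. g z $ i)" using gm True unfolding real_poly_map_def by blast
    ultimately have "g (vec m (\<lambda>l. Y $ l)) $ i = cnj (g (vec m (\<lambda>l. y $ l)) $ i)"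
      using real_poly_fun_cnj[of m "\<lambda>z. g z $ i" "vec m (\<lambda>l. y $ l)"] by simp
    then show "newton_f n m q u w g p Y $ i = cnj (newton_f n m q u w g p y $ pn u k l w i)"
      using True i pi by (simp add: newton_f_def)
  next
    case False
    obtain B e where ie: "i = u + B*w + e" "e < w" "B < k+2*l"
      using decomp[of u i "k+2*l" w] False i n2 by auto
    have w: "w > 0" using ie by simp
    have dm: "(B*w + e) div w = B" "(B*w + e) mod w = e" for B using ie w by simp_all
    have pi: "pn u k l w i = u + pb k l B * w + e" using ie by (simp add: pn_blk)
    have pil: "pn u k l w i < n" using pn_lt[of i u k l w] i n2 by simp
    have L: "newton_f n m q u w g p Y $ i = p (pair_blk m q Y B) $ e"
      using i False ie dm by (simp add: newton_f_def)
    have R: "newton_f n m q u w g p y $ pn u k l w i = p (pair_blk m q y (pb k l B)) $ e"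
      using pil pi dm by (simp add: newton_f_def)
    have "pair_blk m q Y B = vec (m+q) (\<lambda>r. cnj (pair_blk m q y (pb k l B) $ r))"
    proof (rule eq_vecI)
      fix r assume "r < dim_vec (vec (m+q) (\<lambda>r. cnj (pair_blk m q y (pb k l B) $ r)))"
      then have r: "r < m + q" by simp
      show "pair_blk m q Y B $ r = vec (m+q) (\<lambda>r. cnj (pair_blk m q y (pb k l B) $ r)) $ r"
      proof (cases "r < m")
        case True
        then have "r < n" using n1 by simp
        then show ?thesis using True r by (simp add: pair_blk_def Y_def pn_def)
      next
        case False
        have rq: "r - m < q" using r False by simp
        have lt: "m + B*q + (r-m) < n" using blk_lt[OF ie(3) rq, of m] n1 by simp
        have "pn m k l q (m + B*q + (r-m)) = m + pb k l B * q + (r - m)" using rq by (simp add: pn_blk)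
        then show ?thesis using False r lt by (simp add: pair_blk_def Y_def)
      qed
    qed (simp add: pair_blk_def)
    moreover have "real_poly_fun (m+q) (\<lambda>z. p z $ e)" using pm ie(2) unfolding real_poly_map_def by blast
    ultimately have "p (pair_blk m q Y B) $ e = cnj (p (pair_blk m q y (pb k l B)) $ e)"
      using real_poly_fun_cnj[of "m+q" "\<lambda>z. p z $ e" "pair_blk m q y (pb k l B)"]
      by (simp add: pair_blk_def)
    then show "newton_f n m q u w g p Y $ i = cnj (newton_f n m q u w g p y $ pn u k l w i)"
      using L R by simp
  qed
qed

theorem theorem2:
  fixes m k l q u w n :: nat
    and g p :: "complex vec \<Rightarrow> complex vec"
  assumes "u \<le> m"
    and "m + (k + 2 * l) * q = u + (k + 2 * l) * w"
    and "n = m + (k + 2 * l) * q"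
    and "real_poly_map m u g"
    and "real_poly_map (m + q) w p"
  shows "newton_invariant n (newton_f n m q u w g p) (V_set n m k l q)"
proof -
  note um = assms(1) and n1 = assms(3) and gm = assms(4) and pm = assms(5)
  have n2: "n = u + (k+2*l)*w" using assms(2,3) by simp
  define F where "F = newton_f n m q u w g p"
  define N where "N = newton_map n F"
  have key: "N v \<in> V_set n m k l q" if v: "v \<in> V_set n m k l q" for v
  proof -
    have vd: "dim_vec v = n" using v by (simp add: V_set_def)
    have vf: "\<And>j. j < n \<Longrightarrow> v $ j = cnj (v $ pn m k l q j)"
      using V_to_fix[OF v n1] .
    have "dim_vec (N v) = n \<and> (\<forall>j<n. N v $ j = cnj (N v $ pn m k l q j))"
      unfolding N_def
    proof (rule newton_sym[where pout="pn u k l w"])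
      show "pn m k l q (pn m k l q j) = j" for j by (rule pn_pn)
      show "j < n \<Longrightarrow> pn m k l q j < n" for j using pn_lt[of j m k l q] n1 by simp
      show "i < n \<Longrightarrow> pn u k l w i < n" for i using pn_lt[of i u k l w] n2 by simp
      show "F (vec n (\<lambda>a. cnj (y $ pn m k l q a))) $ i = cnj (F y $ pn u k l w i)"
        if "dim_vec y = n" "i < n" for y i
        unfolding F_def by (rule nf_sym[OF n1 n2 um gm pm that])
      show "(\<lambda>t. F (vec n (\<lambda>a. if a=j then t else x$a)) $ i) holomorphic_on UNIV"
        if "dim_vec x = n" "i < n" "j < n" for x i j
        unfolding F_def by (rule nf_hol[OF n2 gm pm that(2)])
      show "dim_vec (F y) = n" for y by (simp add: F_def newton_f_def)
      show "dim_vec v = n" by fact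
      show "j < n \<Longrightarrow> v $ j = cnj (v $ pn m k l q j)" for j by (rule vf)
    qed
    then show ?thesis using fix_to_V[OF _ n1] by blast
  qed
  have iter: "(N ^^ K) v \<in> V_set n m k l q" if "v \<in> V_set n m k l q" for v K
    by (induction K) (simp_all add: that key)
  show ?thesis
    unfolding newton_invariant_def F_def[symmetric] N_def[symmetric]
  proof (intro conjI ballI allI impI)
    fix v assume "v \<in> V_set n m k l q" then show "N v \<in> V_set n m k l q" by (rule key)
  next
    fix v L assume v: "v \<in> V_set n m k l q"
      and L: "dim_vec L = n \<and> (\<forall>i<n. (\<lambda>K. (N ^^ K) v $ i) \<longlonglongrightarrow> L $ i)"
    show "L \<in> V_set n m k l q"
    proof (rule fix_to_V[OF _ n1])
      show "dim_vec L = n" using L by simp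
      fix j assume j: "j < n"
      have pj: "pn m k l q j < n" using pn_lt[of j m k l q] n1 j by simp
      have eq: "(N ^^ K) v $ j = cnj ((N ^^ K) v $ pn m k l q j)" for K
        using V_to_fix[OF iter[OF v] n1 j] .
      have "(\<lambda>K. cnj ((N ^^ K) v $ pn m k l q j)) \<longlonglongrightarrow> cnj (L $ pn m k l q j)"
        using L pj by (intro tendsto_cnj) simp
      then have "(\<lambda>K. (N ^^ K) v $ j) \<longlonglongrightarrow> cnj (L $ pn m k l q j)" unfolding eq .
      moreover have "(\<lambda>K. (N ^^ K) v $ j) \<longlonglongrightarrow> L $ j" using L j by simp
      ultimately show "L $ j = cnj (L $ pn m k l q j)" using LIMSEQ_unique by blast
    qed
  qed
qed

end
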